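(* For $n>0$ and $J\subseteq S$, there is a bijection from the set $\mathrm{NN}_n^J$ of $J$-nonnesting partitions of $[n]$ to the set of order ideals of the parabolic root poset $\Phi_+^J$.
   Context: $S=\{s_1,\dots,s_{n-1}\}$ with $s_i=(i,i+1)$ the adjacent transpositions of $\mathfrak{S}_n$. For $J\subseteq S$, writing $J=S\setminus\{s_{j_1},\dots,s_{j_r}\}$ with $j_1<\dots<j_r$, the $J$-regions are $\{1,\dots,j_1\},\{j_1+1,\dots,j_2\},\dots,\{j_r+1,\dots,n\}$. For a set partition $\mathbf P$ of $[n]$, a bump is a pair $(a,b)$, $a<b$, with $a,b$ in the same part and no element of that part strictly between them. $\mathbf P$ is $J$-nonnesting if (NN1) no two distinct elements of the same $J$-region lie in the same part, and (NN2) there are no two distinct bumps $(i_1,i_2),(j_1,j_2)$ with $i_1<j_1<j_2<i_2$. The root poset of $\mathfrak{S}_n$ is the set of transpositions $(i,j)$, $1\le i<j\le n$, ordered by $(i_1,i_2)\le(j_1,j_2)$ iff $i_1\ge j_1$ and $i_2\le j_2$. The parabolic root poset $\Phi_+^J$ is the order filter of the root poset generated by the adjacent transpositions $s_j=(j,j+1)$ with $s_j\notin J$ (with the induced order). *)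

theory Defs
  imports Main "HOL-Library.Disjoint_Sets"
begin

text \<open>The simple reflection s_i = (i,i+1) of S_n is encoded by the index i in {1..<n};
  a subset J of S is encoded as a set of indices J with J a subset of {1..<n}.\<close>

text \<open>Two elements a, b of [n] lie in the same J-region iff no removed generator s_j
  (j not in J) separates them, i.e. every index i with min a b \<le> i < max a b is in J.\<close>
definition same_J_region :: "nat \<Rightarrow> nat set \<Rightarrow> nat \<Rightarrow> nat \<Rightarrow> bool" where
  "same_J_region n J a b \<longleftrightarrow> a \<in> {1..n} \<and> b \<in> {1..n} \<and>
     (\<forall>i. min a b \<le> i \<and> i < max a b \<longrightarrow> i \<in> J)"

definition bump :: "nat set set \<Rightarrow> nat \<Rightarrow> nat \<Rightarrow> bool" where
  "bump P a b \<longleftrightarrow> a < b \<and> (\<exists>B\<in>P. a \<in> B \<and> b \<in> B \<and> (\<forall>c\<in>B. \<not> (a < c \<and> c < b)))"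

definition J_nonnesting :: "nat \<Rightarrow> nat set \<Rightarrow> nat set set \<Rightarrow> bool" where
  "J_nonnesting n J P \<longleftrightarrow>
     partition_on {1..n} P \<and>
     (\<forall>B\<in>P. \<forall>a\<in>B. \<forall>b\<in>B. a \<noteq> b \<longrightarrow> \<not> same_J_region n J a b) \<and>
     \<not> (\<exists>i1 i2 j1 j2. bump P i1 i2 \<and> bump P j1 j2 \<and> (i1, i2) \<noteq> (j1, j2) \<and>
          i1 < j1 \<and> j1 < j2 \<and> j2 < i2)"

definition NN :: "nat \<Rightarrow> nat set \<Rightarrow> nat set set set" where
  "NN n J = {P. J_nonnesting n J P}"

definition roots :: "nat \<Rightarrow> (nat \<times> nat) set" where
  "roots n = {(i, j). 1 \<le> i \<and> i < j \<and> j \<le> n}"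

definition root_le :: "nat \<times> nat \<Rightarrow> nat \<times> nat \<Rightarrow> bool" where
  "root_le r s \<longleftrightarrow> fst s \<le> fst r \<and> snd r \<le> snd s"

definition parabolic_roots :: "nat \<Rightarrow> nat set \<Rightarrow> (nat \<times> nat) set" where
  "parabolic_roots n J = {r \<in> roots n. \<exists>j \<in> {1..<n} - J. root_le (j, j + 1) r}"

definition order_ideals :: "'a set \<Rightarrow> ('a \<Rightarrow> 'a \<Rightarrow> bool) \<Rightarrow> 'a set set" where
  "order_ideals X le = {I. I \<subseteq> X \<and> (\<forall>x\<in>I. \<forall>y\<in>X. le y x \<longrightarrow> y \<in> I)}"

end

theory Submission
  imports Defs
begin


definition "rel n A = {(x,y). x \<in> {1..n} \<and> y \<in> {1..n} \<and> (x,y) \<in> (A \<union> A\<inverse>)\<^sup>*}"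

locale matching =
  fixes n :: nat and A :: "(nat \<times> nat) set"
  assumes lt: "(a,b) \<in> A \<Longrightarrow> a < b \<and> a \<in> {1..n} \<and> b \<in> {1..n}"
    and fn: "(a,b) \<in> A \<Longrightarrow> (a,c) \<in> A \<Longrightarrow> b = c"
    and inj: "(a,c) \<in> A \<Longrightarrow> (b,c) \<in> A \<Longrightarrow> a = b"
begin

lemma rt_le: "(x,y) \<in> A\<^sup>* \<Longrightarrow> x \<le> y"
  by (induction rule: rtrancl_induct) (auto dest: lt)

lemma t_lt: "(x,y) \<in> A\<^sup>+ \<Longrightarrow> x < y"
  by (induction rule: trancl_induct) (auto dest: lt)

lemma sym_path: "(x,y) \<in> (A \<union> A\<inverse>)\<^sup>* \<Longrightarrow> (x,y) \<in> A\<^sup>* \<or> (y,x) \<in> A\<^sup>*"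
proof (induction rule: rtrancl_induct)
  case base thus ?case by simp
next
  case (step y z)
  from step.hyps(2) have e: "(y,z) \<in> A \<or> (z,y) \<in> A" by auto
  from step.IH show ?case
  proof
    assume xy: "(x,y) \<in> A\<^sup>*"
    show ?case
    proof (cases "(y,z) \<in> A")
      case True thus ?thesis using xy by (meson rtrancl.rtrancl_into_rtrancl)
    next
      case False
      hence zy: "(z,y) \<in> A" using e by auto
      show ?thesis
      proof (cases "x = y")
        case True thus ?thesis using zy by auto
      next
        case False
        hence "(x,y) \<in> A\<^sup>+" using xy by (simp add: rtrancl_eq_or_trancl)
        then obtain w where "(x,w) \<in> A\<^sup>*" "(w,y) \<in> A" using tranclD2 by metis
        with zy inj have "w = z" by blast
        thus ?thesis using \<open>(x,w) \<in> A\<^sup>*\<close> by auto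
      qed
    qed
  next
    assume yx: "(y,x) \<in> A\<^sup>*"
    show ?case
    proof (cases "(z,y) \<in> A")
      case True thus ?thesis using yx by (meson converse_rtrancl_into_rtrancl)
    next
      case False
      hence yz: "(y,z) \<in> A" using e by auto
      show ?thesis
      proof (cases "x = y")
        case True thus ?thesis using yz by auto
      next
        case False
        hence "(y,x) \<in> A\<^sup>+" using yx by (simp add: rtrancl_eq_or_trancl)
        then obtain w where "(y,w) \<in> A" "(w,x) \<in> A\<^sup>*" using tranclD by metis
        with yz fn have "w = z" by blast
        thus ?thesis using \<open>(w,x) \<in> A\<^sup>*\<close> by auto
      qed
    qed
  qed
qed

lemma rel_lt: "(a,b) \<in> rel n A \<Longrightarrow> a < b \<Longrightarrow> (a,b) \<in> A\<^sup>+"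
  unfolding rel_def using sym_path rt_le
  by (metis (no_types, lifting) case_prodD leD mem_Collect_eq rtrancl_eq_or_trancl)

lemma equiv_rel: "equiv {1..n} (rel n A)"
proof (rule equivI)
  show "rel n A \<subseteq> {1..n} \<times> {1..n}" unfolding rel_def by auto
  show "refl_on {1..n} (rel n A)" unfolding refl_on_def rel_def by auto
  show "sym (rel n A)" unfolding sym_def rel_def
  proof (clarsimp)
    fix x y assume "(x,y) \<in> (A \<union> A\<inverse>)\<^sup>*"
    hence "(y,x) \<in> ((A \<union> A\<inverse>)\<inverse>)\<^sup>*" by (simp add: rtrancl_converse)
    moreover have "(A \<union> A\<inverse>)\<inverse> = A \<union> A\<inverse>" by auto
    ultimately show "(y,x) \<in> (A \<union> A\<inverse>)\<^sup>*" by simp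
  qed
  show "trans (rel n A)" unfolding trans_def rel_def by auto
qed

end

lemma bump_quotient:
  assumes "equiv X r"
  shows "bump (X // r) a b \<longleftrightarrow> a < b \<and> (a,b) \<in> r \<and> (\<forall>c. (a,c) \<in> r \<longrightarrow> \<not> (a < c \<and> c < b))"
proof
  assume "bump (X // r) a b"
  then obtain B where B: "a < b" "B \<in> X // r" "a \<in> B" "b \<in> B" "\<forall>c\<in>B. \<not> (a < c \<and> c < b)"
    unfolding bump_def by blast
  then obtain x where x: "x \<in> X" "B = r``{x}" by (auto elim: quotientE)
  have "B = r``{a}" using x B assms by (metis equiv_class_eq Image_singleton_iff)
  thus "a < b \<and> (a,b) \<in> r \<and> (\<forall>c. (a,c) \<in> r \<longrightarrow> \<not> (a < c \<and> c < b))" using B by auto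
next
  assume h: "a < b \<and> (a,b) \<in> r \<and> (\<forall>c. (a,c) \<in> r \<longrightarrow> \<not> (a < c \<and> c < b))"
  have "a \<in> X" using h assms by (meson equiv_class_eq_iff)
  hence "r``{a} \<in> X // r" by (rule quotientI)
  moreover have "a \<in> r``{a}" using \<open>a \<in> X\<close> assms equiv_class_self by metis
  ultimately show "bump (X // r) a b" unfolding bump_def using h by blast
qed

context matching begin

lemma bump_iff: "bump ({1..n} // rel n A) a b \<longleftrightarrow> (a,b) \<in> A"
proof -
  have r: "(a,b) \<in> A \<longleftrightarrow> a < b \<and> (a,b) \<in> rel n A \<and> (\<forall>c. (a,c) \<in> rel n A \<longrightarrow> \<not> (a < c \<and> c < b))"
  proof
    assume ab: "(a,b) \<in> A"
    have "(a,b) \<in> rel n A" using lt[OF ab] ab unfolding rel_def by auto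
    moreover have "\<not> (a < c \<and> c < b)" if "(a,c) \<in> rel n A" for c
    proof
      assume c: "a < c \<and> c < b"
      hence "(a,c) \<in> A\<^sup>+" using rel_lt that by auto
      then obtain w where "(a,w) \<in> A" "(w,c) \<in> A\<^sup>*" using tranclD by metis
      hence "w = b" using fn ab by blast
      thus False using \<open>(w,c) \<in> A\<^sup>*\<close> rt_le c by fastforce
    qed
    ultimately show "a < b \<and> (a,b) \<in> rel n A \<and> (\<forall>c. (a,c) \<in> rel n A \<longrightarrow> \<not> (a < c \<and> c < b))"
      using lt[OF ab] by blast
  next
    assume h: "a < b \<and> (a,b) \<in> rel n A \<and> (\<forall>c. (a,c) \<in> rel n A \<longrightarrow> \<not> (a < c \<and> c < b))"
    hence "(a,b) \<in> A\<^sup>+" using rel_lt by auto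
    then obtain w where w: "(a,w) \<in> A" "(w,b) \<in> A\<^sup>*" using tranclD by metis
    have "(a,w) \<in> rel n A" using lt[OF w(1)] w(1) unfolding rel_def by auto
    moreover have "a < w" "w \<le> b" using lt[OF w(1)] rt_le[OF w(2)] by auto
    ultimately have "w = b" using h by force
    thus "(a,b) \<in> A" using w by simp
  qed
  show ?thesis using bump_quotient[OF equiv_rel] r by simp
qed

end


definition "bset P = {(a,b). bump P a b}"
definition "SB P = {(x, y). \<exists>p \<in> P. x \<in> p \<and> y \<in> p}"

lemma part_block_unique:
  assumes "partition_on X P" "p \<in> P" "q \<in> P" "x \<in> p" "x \<in> q" shows "p = q"
  using assms unfolding partition_on_def disjoint_def by blast

lemma bump_block:
  assumes "partition_on X P" "bump P a b" "a \<in> p" "p \<in> P"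
  shows "b \<in> p \<and> (\<forall>c\<in>p. \<not> (a < c \<and> c < b))"
proof -
  obtain q where q: "q \<in> P" "a \<in> q" "b \<in> q" "\<forall>c\<in>q. \<not> (a < c \<and> c < b)"
    using assms(2) unfolding bump_def by blast
  have "p = q" using part_block_unique[OF assms(1) assms(4) q(1) assms(3) q(2)] .
  thus ?thesis using q by simp
qed

lemma SB_rel:
  assumes P: "partition_on {1..n} P"
  shows "SB P = rel n (bset P)"
proof
  show "rel n (bset P) \<subseteq> SB P"
  proof clarify
    fix x y assume "(x,y) \<in> rel n (bset P)"
    hence xy: "x \<in> {1..n}" "(x,y) \<in> (bset P \<union> (bset P)\<inverse>)\<^sup>*" unfolding rel_def by auto
    from xy(2) show "(x,y) \<in> SB P"
    proof (induction rule: rtrancl_induct)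
      case base
      then show ?case using xy(1) P unfolding partition_on_def SB_def by auto
    next
      case (step y z)
      then obtain p where p: "p \<in> P" "x \<in> p" "y \<in> p" unfolding SB_def by auto
      from step.hyps(2) have "bump P y z \<or> bump P z y" unfolding bset_def by auto
      hence "z \<in> p"
      proof
        assume "bump P y z" thus ?thesis using bump_block[OF P _ p(3) p(1)] by blast
      next
        assume "bump P z y"
        then obtain q where q: "q \<in> P" "z \<in> q" "y \<in> q" unfolding bump_def by blast
        thus ?thesis using part_block_unique[OF P p(1) q(1) p(3) q(3)] by simp
      qed
      thus ?case using p unfolding SB_def by auto
    qed
  qed
next
  have fin: "finite p" if "p \<in> P" for p
    using P that unfolding partition_on_def by (metis Sup_upper finite_atLeastAtMost finite_subset)
  have main: "(x,y) \<in> (bset P)\<^sup>*" if "p \<in> P" "x \<in> p" "y \<in> p" "x \<le> y" for p x y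
    using that
  proof (induction "y - x" arbitrary: x rule: less_induct)
    case less
    show ?case
    proof (cases "x = y")
      case True thus ?thesis by simp
    next
      case False
      define S where "S = {c\<in>p. x < c}"
      have "y \<in> S" using less False unfolding S_def by auto
      have fS: "finite S" using fin[OF less.prems(1)] unfolding S_def by auto
      define c where "c = Min S"
      have cS: "c \<in> S" using fS \<open>y \<in> S\<close> unfolding c_def using Min_in by blast
      have cy: "c \<le> y" using fS \<open>y \<in> S\<close> unfolding c_def by simp
      have "bump P x c" unfolding bump_def
      proof (intro conjI bexI[of _ p])
        show "x < c" using cS unfolding S_def by auto
        show "x \<in> p" "c \<in> p" "p \<in> P" using cS less.prems unfolding S_def by auto
        show "\<forall>d\<in>p. \<not> (x < d \<and> d < c)"
          using fS unfolding c_def S_def by (metis (mono_tags, lifting) Min_le leD mem_Collect_eq)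
      qed
      moreover have "(c,y) \<in> (bset P)\<^sup>*"
        using less.hyps[of c] cS cy less.prems unfolding S_def by auto
      ultimately show ?thesis unfolding bset_def by (meson converse_rtrancl_into_rtrancl mem_Collect_eq case_prodI)
    qed
  qed
  show "SB P \<subseteq> rel n (bset P)"
  proof clarify
    fix x y assume "(x,y) \<in> SB P"
    then obtain p where p: "p \<in> P" "x \<in> p" "y \<in> p" unfolding SB_def by auto
    have xy: "x \<in> {1..n}" "y \<in> {1..n}" using p P unfolding partition_on_def by auto
    have mono: "(bset P)\<^sup>* \<subseteq> (bset P \<union> (bset P)\<inverse>)\<^sup>*" by (rule rtrancl_mono) auto
    have "(x,y) \<in> (bset P \<union> (bset P)\<inverse>)\<^sup>*"
    proof (cases "x \<le> y")
      case True thus ?thesis using main[OF p] mono by auto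
    next
      case False
      hence "(y,x) \<in> (bset P)\<^sup>*" using main[OF p(1) p(3) p(2)] by auto
      hence "(y,x) \<in> (bset P \<union> (bset P)\<inverse>)\<^sup>*" using mono by auto
      hence "(x,y) \<in> ((bset P \<union> (bset P)\<inverse>)\<inverse>)\<^sup>*" by (simp add: rtrancl_converse)
      moreover have "(bset P \<union> (bset P)\<inverse>)\<inverse> = bset P \<union> (bset P)\<inverse>" by auto
      ultimately show ?thesis by simp
    qed
    thus "(x,y) \<in> rel n (bset P)" using xy unfolding rel_def by auto
  qed
qed

lemma P_recover:
  assumes P: "partition_on {1..n} P"
  shows "{1..n} // rel n (bset P) = P"
  using partition_on_eq_quotient[OF P] SB_rel[OF P] unfolding SB_def by simp



definition "AC n J = {A. A \<subseteq> parabolic_roots n J \<and> (\<forall>a\<in>A. \<forall>b\<in>A. root_le a b \<longrightarrow> a = b)}"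

lemma AC_matching: assumes "A \<in> AC n J" shows "matching n A"
proof
  fix a b assume "(a,b) \<in> A"
  thus "a < b \<and> a \<in> {1..n} \<and> b \<in> {1..n}" using assms
    unfolding AC_def parabolic_roots_def roots_def by auto
next
  have anti: "\<And>x y. x \<in> A \<Longrightarrow> y \<in> A \<Longrightarrow> root_le x y \<Longrightarrow> x = y"
    using assms unfolding AC_def by blast
  fix a b c assume h: "(a,b) \<in> A" "(a,c) \<in> A"
  show "b = c"
  proof (cases "b \<le> c")
    case True thus ?thesis using anti[OF h(1) h(2)] unfolding root_le_def by simp
  next
    case False thus ?thesis using anti[OF h(2) h(1)] unfolding root_le_def by simp
  qed
next
  have anti: "\<And>x y. x \<in> A \<Longrightarrow> y \<in> A \<Longrightarrow> root_le x y \<Longrightarrow> x = y"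
    using assms unfolding AC_def by blast
  fix a b c assume h: "(a,c) \<in> A" "(b,c) \<in> A"
  show "a = b"
  proof (cases "b \<le> a")
    case True thus ?thesis using anti[OF h(1) h(2)] unfolding root_le_def by simp
  next
    case False thus ?thesis using anti[OF h(2) h(1)] unfolding root_le_def by simp
  qed
qed

lemma bset_AC: assumes "P \<in> NN n J" shows "bset P \<in> AC n J"
proof -
  have NNP: "partition_on {1..n} P"
    "\<And>B a b. B\<in>P \<Longrightarrow> a\<in>B \<Longrightarrow> b\<in>B \<Longrightarrow> a \<noteq> b \<Longrightarrow> \<not> same_J_region n J a b"
    "\<And>i1 i2 j1 j2. bump P i1 i2 \<Longrightarrow> bump P j1 j2 \<Longrightarrow> (i1, i2) \<noteq> (j1, j2) \<Longrightarrow>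
          i1 < j1 \<Longrightarrow> j1 < j2 \<Longrightarrow> j2 < i2 \<Longrightarrow> False"
    using assms unfolding NN_def J_nonnesting_def by blast+
  have sub: "bset P \<subseteq> parabolic_roots n J"
  proof clarify
    fix a b assume "(a,b) \<in> bset P"
    then obtain B where B: "a < b" "B \<in> P" "a \<in> B" "b \<in> B" unfolding bset_def bump_def by blast
    have ab: "a \<in> {1..n}" "b \<in> {1..n}" using B NNP(1) unfolding partition_on_def by auto
    have "\<not> same_J_region n J a b" using NNP(2)[OF B(2-4)] B(1) by simp
    then obtain i where i: "a \<le> i" "i < b" "i \<notin> J" using ab B(1) unfolding same_J_region_def by auto
    show "(a,b) \<in> parabolic_roots n J" unfolding parabolic_roots_def roots_def root_le_def
      using i ab B(1) by (intro CollectI conjI bexI[of _ i]) auto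
  qed
  have anti: "x = y" if "x \<in> bset P" "y \<in> bset P" "root_le x y" for x y
  proof -
    obtain a b c d where xy: "x = (a,b)" "y = (c,d)" by force
    have b1: "bump P a b" and b2: "bump P c d" using that xy unfolding bset_def by auto
    have le: "c \<le> a" "b \<le> d" using that xy unfolding root_le_def by auto
    obtain p where p: "p \<in> P" "a \<in> p" "b \<in> p" using b1 unfolding bump_def by blast
    obtain q where q: "q \<in> P" "c \<in> q" "d \<in> q" using b2 unfolding bump_def by blast
    show ?thesis
    proof (rule ccontr)
      assume ne: "x \<noteq> y"
      show False
      proof (cases "c = a")
        case True
        hence "b < d" using ne le xy by auto
        have "p = q" using part_block_unique[OF NNP(1) p(1) q(1) p(2)] True q(2) by simp
        hence "b \<in> q" using p by simp
        thus False using bump_block[OF NNP(1) b2 q(2) q(1)] \<open>b < d\<close> b1 True unfolding bump_def by auto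
      next
        case False
        hence ca: "c < a" using le by auto
        show False
        proof (cases "b = d")
          case True
          have "p = q" using part_block_unique[OF NNP(1) p(1) q(1) p(3)] q True by auto
          hence "a \<in> q" using p by simp
          thus False using bump_block[OF NNP(1) b2 q(2) q(1)] ca b1 True unfolding bump_def by auto
        next
          case False
          hence "b < d" using le by auto
          thus False using NNP(3)[OF b2 b1] ca b1 ne xy unfolding bump_def by auto
        qed
      qed
    qed
  qed
  show ?thesis unfolding AC_def using sub anti by blast
qed

lemma same_J_sym: "same_J_region n J a b = same_J_region n J b a"
  unfolding same_J_region_def by (metis min.commute max.commute)

lemma quot_NN:
  assumes A: "A \<in> AC n J"
  shows "{1..n} // rel n A \<in> NN n J"
proof -
  interpret matching n A by (rule AC_matching[OF A])
  have part: "partition_on {1..n} ({1..n} // rel n A)" by (rule partition_on_quotient[OF equiv_rel])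
  have nn1: "\<not> same_J_region n J a b" if hyp: "B \<in> {1..n} // rel n A" "a \<in> B" "b \<in> B" "a \<noteq> b" for B a b
  proof -
    obtain x where x: "x \<in> {1..n}" "B = rel n A `` {x}" using hyp(1) unfolding quotient_def by blast
    have xa: "(x,a) \<in> rel n A" "(x,b) \<in> rel n A" using x hyp by auto
    have rab: "(a,b) \<in> rel n A" using xa equiv_rel unfolding equiv_def sym_def trans_def by blast
    have rba: "(b,a) \<in> rel n A" using xa equiv_rel unfolding equiv_def sym_def trans_def by blast
    have key: "\<not> same_J_region n J x y" if khyp: "(x,y) \<in> rel n A" "x < y" for x y
    proof -
      have "(x,y) \<in> A\<^sup>+" using rel_lt khyp by auto
      then obtain w where w: "(x,w) \<in> A" "(w,y) \<in> A\<^sup>*" using tranclD by metis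
      have "w \<le> y" using rt_le[OF w(2)] .
      have "(x,w) \<in> parabolic_roots n J" using w(1) A unfolding AC_def by auto
      then obtain j where "j \<notin> J" "x \<le> j" "j + 1 \<le> w"
        unfolding parabolic_roots_def root_le_def by auto
      hence "min x y \<le> j" "j < max x y" using \<open>w \<le> y\<close> \<open>x < y\<close> by auto
      thus ?thesis unfolding same_J_region_def using \<open>j \<notin> J\<close> by blast
    qed
    show ?thesis
    proof (cases "a < b")
      case True thus ?thesis using key rab by auto
    next
      case False
      hence "b < a" using hyp by auto
      hence "\<not> same_J_region n J b a" using key rba by auto
      thus ?thesis using same_J_sym by metis
    qed
  qed
  have nn2: "False" if "bump ({1..n} // rel n A) i1 i2" "bump ({1..n} // rel n A) j1 j2"
     "(i1, i2) \<noteq> (j1, j2)" "i1 < j1" "j1 < j2" "j2 < i2" for i1 i2 j1 j2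
  proof -
    have "(i1,i2) \<in> A" "(j1,j2) \<in> A" using that bump_iff by auto
    moreover have "root_le (j1,j2) (i1,i2)" unfolding root_le_def using that by auto
    ultimately show False using A that(3) unfolding AC_def by blast
  qed
  show ?thesis unfolding NN_def J_nonnesting_def
  proof (intro CollectI conjI ballI impI)
    show "partition_on {1..n} ({1..n} // rel n A)" by (rule part)
  next
    fix B a b assume "B \<in> {1..n} // rel n A" "a \<in> B" "b \<in> B" "a \<noteq> b"
    thus "\<not> same_J_region n J a b" by (rule nn1)
  next
    show "\<not> (\<exists>i1 i2 j1 j2. bump ({1..n} // rel n A) i1 i2 \<and> bump ({1..n} // rel n A) j1 j2 \<and> (i1, i2) \<noteq> (j1, j2) \<and>
          i1 < j1 \<and> j1 < j2 \<and> j2 < i2)" using nn2 by blast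
  qed
qed

lemma bij1: "bij_betw bset (NN n J) (AC n J)"
proof (rule bij_betw_byWitness[where f' = "\<lambda>A. {1..n} // rel n A"])
  show "\<forall>P\<in>NN n J. {1..n} // rel n (bset P) = P"
  proof
    fix P assume "P \<in> NN n J"
    hence "partition_on {1..n} P" unfolding NN_def J_nonnesting_def by simp
    thus "{1..n} // rel n (bset P) = P" by (rule P_recover)
  qed
  show "\<forall>A\<in>AC n J. bset ({1..n} // rel n A) = A"
  proof
    fix A assume "A \<in> AC n J"
    then interpret matching n A by (rule AC_matching)
    show "bset ({1..n} // rel n A) = A" unfolding bset_def using bump_iff by auto
  qed
  show "bset ` NN n J \<subseteq> AC n J" using bset_AC by (rule image_subsetI)
  show "(\<lambda>A. {1..n} // rel n A) ` AC n J \<subseteq> NN n J" using quot_NN by (rule image_subsetI)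
qed



definition "down n J A = {x \<in> parabolic_roots n J. \<exists>a\<in>A. root_le x a}"
definition "maxs I = {x \<in> I. \<forall>y\<in>I. root_le x y \<longrightarrow> y = x}"

lemma root_le_trans: "root_le x y \<Longrightarrow> root_le y z \<Longrightarrow> root_le x z"
  unfolding root_le_def by auto

lemma root_le_refl: "root_le x x"
  unfolding root_le_def by auto

lemma root_le_antisym: "root_le x y \<Longrightarrow> root_le y x \<Longrightarrow> x = y"
  unfolding root_le_def by (simp add: prod_eq_iff)

lemma fin_X: "finite (parabolic_roots n J)"
proof -
  have "parabolic_roots n J \<subseteq> {1..n} \<times> {1..n}"
    unfolding parabolic_roots_def roots_def by auto
  thus ?thesis by (rule finite_subset) auto
qed

lemma exists_max:
  assumes I: "I \<in> order_ideals (parabolic_roots n J) root_le" and x: "x \<in> I"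
  shows "\<exists>y\<in>maxs I. root_le x y"
proof -
  define S where "S = {y \<in> I. root_le x y}"
  have IX: "I \<subseteq> parabolic_roots n J" using I unfolding order_ideals_def by simp
  have "S \<subseteq> parabolic_roots n J" using IX unfolding S_def by blast
  hence fS: "finite S" using fin_X finite_subset by blast
  have xS: "x \<in> S" using x root_le_refl unfolding S_def by simp
  define g where "g = (\<lambda>y::nat\<times>nat. snd y - fst y)"
  define m where "m = Max (g ` S)"
  have "m \<in> g ` S" unfolding m_def using fS xS Max_in by blast
  then obtain y where y: "y \<in> S" "g y = m" by auto
  have gle: "g z \<le> g y" if "z \<in> S" for z using fS that y unfolding m_def by simp
  have "y \<in> maxs I"
  proof -
    have "z = y" if z: "z \<in> I" "root_le y z" for z
    proof -
      have "z \<in> S" using z y root_le_trans unfolding S_def by blast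
      hence "g z \<le> g y" by (rule gle)
      moreover have "fst y < snd y" using y IX unfolding S_def parabolic_roots_def roots_def by auto
      moreover have "fst z \<le> fst y" "snd y \<le> snd z" using z unfolding root_le_def by auto
      ultimately have "fst z = fst y" "snd z = snd y" unfolding g_def by auto
      thus ?thesis by (simp add: prod_eq_iff)
    qed
    thus ?thesis using y unfolding maxs_def S_def by blast
  qed
  thus ?thesis using y unfolding S_def by blast
qed

lemma bij2: "bij_betw (down n J) (AC n J) (order_ideals (parabolic_roots n J) root_le)"
proof (rule bij_betw_byWitness[where f' = maxs])
  show "\<forall>A\<in>AC n J. maxs (down n J A) = A"
  proof
    fix A assume A: "A \<in> AC n J"
    have AX: "A \<subseteq> parabolic_roots n J" and anti: "\<And>a b. a \<in> A \<Longrightarrow> b \<in> A \<Longrightarrow> root_le a b \<Longrightarrow> a = b"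
      using A unfolding AC_def by auto
    show "maxs (down n J A) = A"
    proof
      show "maxs (down n J A) \<subseteq> A"
      proof
        fix x assume "x \<in> maxs (down n J A)"
        hence x: "x \<in> down n J A" "\<And>y. y \<in> down n J A \<Longrightarrow> root_le x y \<Longrightarrow> y = x"
          unfolding maxs_def by auto
        then obtain a where a: "a \<in> A" "root_le x a" unfolding down_def by auto
        have "a \<in> down n J A" using a AX root_le_refl unfolding down_def by blast
        hence "a = x" using x(2) a by blast
        thus "x \<in> A" using a by simp
      qed
      show "A \<subseteq> maxs (down n J A)"
      proof
        fix a assume a: "a \<in> A"
        have "a \<in> down n J A" using a AX root_le_refl unfolding down_def by blast
        moreover have "y = a" if yh: "y \<in> down n J A" "root_le a y" for y
        proof -
          obtain b where b: "b \<in> A" "root_le y b" using yh(1) unfolding down_def by blast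
          have "a = b" using anti[OF a b(1)] root_le_trans[OF yh(2) b(2)] .
          thus ?thesis using root_le_antisym yh(2) b(2) by blast
        qed
        ultimately show "a \<in> maxs (down n J A)" unfolding maxs_def by blast
      qed
    qed
  qed
  show "\<forall>I\<in>order_ideals (parabolic_roots n J) root_le. down n J (maxs I) = I"
  proof
    fix I assume I: "I \<in> order_ideals (parabolic_roots n J) root_le"
    have IX: "I \<subseteq> parabolic_roots n J" and cl: "\<And>x y. x \<in> I \<Longrightarrow> y \<in> parabolic_roots n J \<Longrightarrow> root_le y x \<Longrightarrow> y \<in> I"
      using I unfolding order_ideals_def by auto
    show "down n J (maxs I) = I"
    proof
      show "down n J (maxs I) \<subseteq> I" unfolding down_def maxs_def using cl by blast
      show "I \<subseteq> down n J (maxs I)" unfolding down_def using exists_max[OF I] IX by blast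
    qed
  qed
  show "down n J ` AC n J \<subseteq> order_ideals (parabolic_roots n J) root_le"
  proof (rule image_subsetI)
    fix A assume "A \<in> AC n J"
    show "down n J A \<in> order_ideals (parabolic_roots n J) root_le"
      unfolding order_ideals_def
    proof (intro CollectI conjI ballI impI)
      show "down n J A \<subseteq> parabolic_roots n J" unfolding down_def by blast
      fix x y assume "x \<in> down n J A" "y \<in> parabolic_roots n J" "root_le y x"
      then obtain a where "a \<in> A" "root_le x a" unfolding down_def by blast
      hence "root_le y a" using root_le_trans \<open>root_le y x\<close> by blast
      thus "y \<in> down n J A" using \<open>a \<in> A\<close> \<open>y \<in> parabolic_roots n J\<close> unfolding down_def by blast
    qed
  qed
  show "maxs ` order_ideals (parabolic_roots n J) root_le \<subseteq> AC n J"
  proof (rule image_subsetI)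
    fix I assume "I \<in> order_ideals (parabolic_roots n J) root_le"
    hence IX: "I \<subseteq> parabolic_roots n J" unfolding order_ideals_def by simp
    show "maxs I \<in> AC n J" unfolding AC_def
    proof (intro CollectI conjI ballI impI)
      show "maxs I \<subseteq> parabolic_roots n J" using IX unfolding maxs_def by blast
      fix a b assume "a \<in> maxs I" "b \<in> maxs I" "root_le a b"
      thus "a = b" unfolding maxs_def by blast
    qed
  qed
qed

theorem lemma5p2:
  fixes n :: nat and J :: "nat set"
  assumes "n > 0" and "J \<subseteq> {1..<n}"
  shows "\<exists>f. bij_betw f (NN n J) (order_ideals (parabolic_roots n J) root_le)"
  using bij_betw_trans[OF bij1 bij2] by blast

end
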